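(* Consider the Variance-shifting Procedure described in the context, with the variance metric of model (I), i.e. $\mathcal{F}(\bar f)=\mathcal{E}$ for every $\bar f$, so $\Delta(\bar f,s^2)=\sum_{ij\in\mathcal{E}}\Delta_{ij}(s^2_{ij})$ with each $\Delta_{ij}$ convex and nondecreasing. Let $\Delta^*=\min\{\Delta(\bar f,\mathbf{V}(\mathcal{A})):(\bar f,\mathcal{A})\text{ compatible}\}$. If the procedure stops at Step 5 of iteration $k$, then $\Delta(\bar f^{k-1},s^2_{k-1})=\Delta^*$.
   Context: Network (DC model): bus set $\mathcal{B}$, $n=|\mathcal{B}|$; line set $\mathcal{E}$, $m=|\mathcal{E}|$; each line $ij$ has susceptance $b_{ij}>0$ and limit $f^{\max}_{ij}>0$. $B$ is the $n\times n$ bus susceptance matrix; $\hat B$ is $B$ with last row and column removed (assumed invertible); $\breve B=\begin{pmatrix}\hat B^{-1}&0\\0&0\end{pmatrix}$ with $i$-th row $\breve B_i$; $\pi_{ij}=\breve B_i^T-\breve B_j^T$. $\mathcal{G}\subseteq\mathcal{B}$ is the set of generator buses, with limits $p_i^{\min}\le p_i^{\max}$ and costs $c_i(p)=c_{i0}p^2+c_{i1}p+c_{i2}$, $c_{i0}\ge 0$. $d\in\mathbb{R}^n$ are loads, $\mu\in\mathbb{R}^n$ mean stochastic injections, $\omega$ a zero-mean random vector with covariance $\Omega$. $\mathcal{K}$ is a given convex set of $n\times n$ participation matrices $\mathcal{A}$ (with rows $\mathcal{A}_i$). Safety parameters $\nu_{ij}\ge0$ (lines) and $\nu_i\ge0$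 (generators) are given. For a matrix $\mathcal{A}$, $\mathbf{V}(\mathcal{A})\in\mathbb{R}^m$ has entries $\mathbf{V}(\mathcal{A})_{ij}=b_{ij}^2\pi_{ij}^T(I-\mathcal{A})\Omega(I-\mathcal{A}^T)\pi_{ij}$ (line flow variances). Compatibility: a pair $(\bar f,\mathcal{A})$ with $\bar f\in\mathbb{R}^m$ is compatible if $\mathcal{A}\in\mathcal{K}$ and there exist $\bar p\in\mathbb{R}^n$ (with $\bar p_i=0$ for $i\notin\mathcal{G}$) and $\bar\theta\in\mathbb{R}^n$ with $B\bar\theta=\bar p+\mu-d$; $\bar f_{ij}=b_{ij}(\bar\theta_i-\bar\theta_j)$ and $|\bar f_{ij}|+\nu_{ij}\sqrt{\mathbf{V}(\mathcal{A})_{ij}}\le f^{\max}_{ij}$ for all $ij\in\mathcal{E}$; and $p_i^{\min}+\nu_i\sqrt{\mathcal{A}_i^T\Omega\mathcal{A}_i}\le\bar p_i\le p_i^{\max}-\nu_i\sqrt{\mathcal{A}_i^T\Omega\mathcal{A}_i}$ for all $i\in\mathcal{G}$ (i.e. they extend to a feasible solution of the safety-constrained DC-OPF, whose objective is $\sum_{i\in\mathcal{G}}[c_{i0}(\bar p_i^2+\mathcal{A}_i^T\Omega\mathcal{A}_i)+c_{i1}\bar p_i+c_{i2}]$). Variance metric (general form): for each line $ij$ a convex nondecreasing function $\Delta_{ij}:[0,\infty)\to[0,\infty)$, and a set $\mathcal{F}(\bar f)\subseteq\mathcal{E}$; $\Delta(\bar f,s^2)=\sum_{ij\in\mathcal{F}(\bar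 f)}\Delta_{ij}(s^2_{ij})$. Subproblems. For $\hat{\mathcal{A}}\in\mathcal{K}$ and $0<\tau<1$, $\mathrm{Reroute}(\hat{\mathcal{A}},\tau)$ is: minimize $\sum_{i\in\mathcal{G}}[c_{i0}(\bar p_i^2+\hat{\mathcal{A}}_i^T\Omega\hat{\mathcal{A}}_i)+c_{i1}\bar p_i+c_{i2}]$ over $\bar p,\bar f,\bar\theta$ subject to $B\bar\theta=\bar p+\mu-d$, $\bar f_{ij}=b_{ij}(\bar\theta_i-\bar\theta_j)$, $|\bar f_{ij}|+\nu_{ij}\sqrt{\mathbf{V}(\hat{\mathcal{A}})_{ij}}\le(1-\tau)f^{\max}_{ij}$ for all $ij\in\mathcal{E}$, and the generator constraints above with $\hat{\mathcal{A}}$. For $\bar f'$, $\mathcal{A}'$, let $\mathbf{T}(\bar f',\mathcal{A}',\tau)=\{ij\in\mathcal{E}:|\bar f'_{ij}|+\nu_{ij}\sqrt{\mathbf{V}(\mathcal{A}')_{ij}}\ge(1-\tau)f^{\max}_{ij}\}$. $\mathrm{VShift}(\bar f',\mathcal{A}',\tau)$ is: minimize $\sum_{ij\in\mathcal{F}(\bar f')}\Delta_{ij}(s_{ij}^2)$ over $s\in\mathbb{R}^m_{\ge0}$, $\mathcal{A}$ subject to $\mathcal{A}\in\mathcal{K}$, $s_{ij}^2\ge\mathbf{V}(\mathcal{A})_{ij}$ for all $ij\in\mathcal{E}$, and $|\bar f'_{ij}|+\nu_{ij}s_{ij}\le f^{\max}_{ij}$ for $ij\in\mathbf{T}(\bar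 f',\mathcal{A}',\tau)$. Variance-shifting Procedure. Input: a feasible solution $(\bar p^0,\bar f^0,\mathcal{A}_0)$ of the safety-constrained problem (so $(\bar f^0,\mathcal{A}_0)$ is compatible), the metric $\Delta$, $0<\tau<1$, and an iteration bound $N\ge1$; set $s^2_0=\mathbf{V}(\mathcal{A}_0)$. For $k=1,\dots,N$: (1) solve $\mathrm{Reroute}(\mathcal{A}_{k-1},\tau)$; if infeasible, stop; else let $(\bar p^k,\bar f^k,\bar\theta^k)$ be an optimal solution. (2) Solve $\mathrm{VShift}(\bar f^k,\mathcal{A}_{k-1},\tau)$, with optimal solution $(\hat s_k,\hat{\mathcal{A}}_k)$. (3) Choose the largest $\lambda\in(0,1]$ such that $(\bar f^k,(1-\lambda)\mathcal{A}_{k-1}+\lambda\hat{\mathcal{A}}_k)$ is compatible. (4) Set $\mathcal{A}_k=(1-\lambda)\mathcal{A}_{k-1}+\lambda\hat{\mathcal{A}}_k$ and $s^2_k=\mathbf{V}(\mathcal{A}_k)$. (5) If $\Delta(\bar f^k,s^2_k)\ge\Delta(\bar f^{k-1},s^2_{k-1})$, stop; otherwise reset $\tau\leftarrow\tau/2$ and continue. *)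

theory Defs
  imports "HOL-Analysis.Convex" "Jordan_Normal_Form.Matrix"
begin

text \<open>Buses are 0..<n (the last bus is n-1); a line is a pair (i,j) of buses,
  with flows oriented from i to j. Vectors over lines are functions on pairs, only their
  values on the line set matter.\<close>

record net =
  nb :: nat
  lines :: "(nat \<times> nat) set"
  susc :: "nat \<times> nat \<Rightarrow> real"
  fmax :: "nat \<times> nat \<Rightarrow> real"
  gens :: "nat set"
  pmin :: "nat \<Rightarrow> real"
  pmax :: "nat \<Rightarrow> real"
  c0 :: "nat \<Rightarrow> real"
  c1 :: "nat \<Rightarrow> real"
  c2 :: "nat \<Rightarrow> real"
  load :: "real vec"
  mu :: "real vec"
  Omega :: "real mat"
  Kset :: "real mat set"
  nu_line :: "nat \<times> nat \<Rightarrow> real"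
  nu_gen :: "nat \<Rightarrow> real"
  Delta :: "nat \<times> nat \<Rightarrow> real \<Rightarrow> real"

definition incid :: "nat \<times> nat \<Rightarrow> nat \<Rightarrow> real" where
  "incid e k = (if k = fst e then 1 else if k = snd e then -1 else 0)"

definition Bmat :: "net \<Rightarrow> real mat" where
  "Bmat N = mat (nb N) (nb N) (\<lambda>(k,l). \<Sum>e\<in>lines N. susc N e * incid e k * incid e l)"

definition hatB :: "net \<Rightarrow> real mat" where
  "hatB N = mat (nb N - 1) (nb N - 1) (\<lambda>(k,l). Bmat N $$ (k,l))"

definition hatB_inv :: "net \<Rightarrow> real mat" where
  "hatB_inv N = (SOME X. X \<in> carrier_mat (nb N - 1) (nb N - 1) \<and>
      hatB N * X = 1\<^sub>m (nb N - 1) \<and> X * hatB N = 1\<^sub>m (nb N - 1))"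

definition breveB :: "net \<Rightarrow> real mat" where
  "breveB N = mat (nb N) (nb N)
     (\<lambda>(k,l). if k < nb N - 1 \<and> l < nb N - 1 then hatB_inv N $$ (k,l) else 0)"

definition piv :: "net \<Rightarrow> nat \<times> nat \<Rightarrow> real vec" where
  "piv N e = row (breveB N) (fst e) - row (breveB N) (snd e)"

definition Vvar :: "net \<Rightarrow> real mat \<Rightarrow> nat \<times> nat \<Rightarrow> real" where
  "Vvar N A e = (susc N e)\<^sup>2 *
     (piv N e \<bullet> (((1\<^sub>m (nb N) - A) * Omega N * (1\<^sub>m (nb N) - transpose_mat A)) *\<^sub>v piv N e))"

definition genvar :: "net \<Rightarrow> real mat \<Rightarrow> nat \<Rightarrow> real" where
  "genvar N A i = row A i \<bullet> (Omega N *\<^sub>v row A i)"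

definition dc_flow :: "net \<Rightarrow> real vec \<Rightarrow> real vec \<Rightarrow> (nat \<times> nat \<Rightarrow> real) \<Rightarrow> bool" where
  "dc_flow N p \<theta> f \<longleftrightarrow> p \<in> carrier_vec (nb N) \<and> \<theta> \<in> carrier_vec (nb N) \<and>
     (\<forall>i<nb N. i \<notin> gens N \<longrightarrow> p $ i = 0) \<and>
     Bmat N *\<^sub>v \<theta> = p + mu N - load N \<and>
     (\<forall>e\<in>lines N. f e = susc N e * (\<theta> $ fst e - \<theta> $ snd e))"

definition line_ok :: "net \<Rightarrow> real mat \<Rightarrow> (nat \<times> nat \<Rightarrow> real) \<Rightarrow> real \<Rightarrow> bool" where
  "line_ok N A f c \<longleftrightarrow>
     (\<forall>e\<in>lines N. \<bar>f e\<bar> + nu_line N e * sqrt (Vvar N A e) \<le> c * fmax N e)"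

definition gen_ok :: "net \<Rightarrow> real mat \<Rightarrow> real vec \<Rightarrow> bool" where
  "gen_ok N A p \<longleftrightarrow> (\<forall>i\<in>gens N.
     pmin N i + nu_gen N i * sqrt (genvar N A i) \<le> p $ i \<and>
     p $ i \<le> pmax N i - nu_gen N i * sqrt (genvar N A i))"

definition scopf_feasible :: "net \<Rightarrow> real vec \<Rightarrow> (nat \<times> nat \<Rightarrow> real) \<Rightarrow> real mat \<Rightarrow> bool" where
  "scopf_feasible N p f A \<longleftrightarrow> A \<in> Kset N \<and>
     (\<exists>\<theta>. dc_flow N p \<theta> f) \<and> line_ok N A f 1 \<and> gen_ok N A p"

definition compatible :: "net \<Rightarrow> (nat \<times> nat \<Rightarrow> real) \<Rightarrow> real mat \<Rightarrow> bool" where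
  "compatible N f A \<longleftrightarrow> (\<exists>p. scopf_feasible N p f A)"

definition cost :: "net \<Rightarrow> real mat \<Rightarrow> real vec \<Rightarrow> real" where
  "cost N A p = (\<Sum>i\<in>gens N. c0 N i * ((p $ i)\<^sup>2 + genvar N A i) + c1 N i * p $ i + c2 N i)"

definition reroute_feasible ::
  "net \<Rightarrow> real mat \<Rightarrow> real \<Rightarrow> real vec \<Rightarrow> (nat \<times> nat \<Rightarrow> real) \<Rightarrow> real vec \<Rightarrow> bool" where
  "reroute_feasible N A \<tau> p f \<theta> \<longleftrightarrow>
     dc_flow N p \<theta> f \<and> line_ok N A f (1 - \<tau>) \<and> gen_ok N A p"

definition reroute_opt ::
  "net \<Rightarrow> real mat \<Rightarrow> real \<Rightarrow> real vec \<Rightarrow> (nat \<times> nat \<Rightarrow> real) \<Rightarrow> real vec \<Rightarrow> bool" where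
  "reroute_opt N A \<tau> p f \<theta> \<longleftrightarrow> reroute_feasible N A \<tau> p f \<theta> \<and>
     (\<forall>p' f' \<theta>'. reroute_feasible N A \<tau> p' f' \<theta>' \<longrightarrow> cost N A p \<le> cost N A p')"

definition Tset :: "net \<Rightarrow> (nat \<times> nat \<Rightarrow> real) \<Rightarrow> real mat \<Rightarrow> real \<Rightarrow> (nat \<times> nat) set" where
  "Tset N f A \<tau> = {e\<in>lines N. \<bar>f e\<bar> + nu_line N e * sqrt (Vvar N A e) \<ge> (1 - \<tau>) * fmax N e}"

text \<open>Variance metric of model (I): F(f) = E for every f, so the metric does not depend on f.\<close>
definition metric :: "net \<Rightarrow> (nat \<times> nat \<Rightarrow> real) \<Rightarrow> (nat \<times> nat \<Rightarrow> real) \<Rightarrow> real" where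
  "metric N f s2 = (\<Sum>e\<in>lines N. Delta N e (s2 e))"

definition vshift_feasible ::
  "net \<Rightarrow> (nat \<times> nat \<Rightarrow> real) \<Rightarrow> real mat \<Rightarrow> real \<Rightarrow> (nat \<times> nat \<Rightarrow> real) \<Rightarrow> real mat \<Rightarrow> bool" where
  "vshift_feasible N f A' \<tau> s A \<longleftrightarrow> A \<in> Kset N \<and>
     (\<forall>e\<in>lines N. 0 \<le> s e \<and> (s e)\<^sup>2 \<ge> Vvar N A e) \<and>
     (\<forall>e\<in>Tset N f A' \<tau>. \<bar>f e\<bar> + nu_line N e * s e \<le> fmax N e)"

definition vshift_opt ::
  "net \<Rightarrow> (nat \<times> nat \<Rightarrow> real) \<Rightarrow> real mat \<Rightarrow> real \<Rightarrow> (nat \<times> nat \<Rightarrow> real) \<Rightarrow> real mat \<Rightarrow> bool" where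
  "vshift_opt N f A' \<tau> s A \<longleftrightarrow> vshift_feasible N f A' \<tau> s A \<and>
     (\<forall>s' B. vshift_feasible N f A' \<tau> s' B \<longrightarrow>
        metric N f (\<lambda>e. (s e)\<^sup>2) \<le> metric N f (\<lambda>e. (s' e)\<^sup>2))"

definition mat_set_convex :: "real mat set \<Rightarrow> bool" where
  "mat_set_convex K \<longleftrightarrow> (\<forall>A\<in>K. \<forall>B\<in>K. \<forall>t::real. 0 \<le> t \<and> t \<le> 1 \<longrightarrow>
     (1 - t) \<cdot>\<^sub>m A + t \<cdot>\<^sub>m B \<in> K)"

definition is_greatest :: "real set \<Rightarrow> real \<Rightarrow> bool" where
  "is_greatest S x \<longleftrightarrow> x \<in> S \<and> (\<forall>y\<in>S. y \<le> x)"

definition is_least :: "real set \<Rightarrow> real \<Rightarrow> bool" where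
  "is_least S x \<longleftrightarrow> x \<in> S \<and> (\<forall>y\<in>S. x \<le> y)"

definition net_wf :: "net \<Rightarrow> bool" where
  "net_wf N \<longleftrightarrow>
     nb N \<ge> 1 \<and> finite (lines N) \<and>
     (\<forall>e\<in>lines N. fst e < nb N \<and> snd e < nb N \<and> fst e \<noteq> snd e \<and>
        susc N e > 0 \<and> fmax N e > 0 \<and> nu_line N e \<ge> 0) \<and>
     invertible_mat (hatB N) \<and>
     gens N \<subseteq> {..<nb N} \<and>
     (\<forall>i\<in>gens N. pmin N i \<le> pmax N i \<and> c0 N i \<ge> 0 \<and> nu_gen N i \<ge> 0) \<and>
     load N \<in> carrier_vec (nb N) \<and> mu N \<in> carrier_vec (nb N) \<and>
     Omega N \<in> carrier_mat (nb N) (nb N) \<and> transpose_mat (Omega N) = Omega N \<and>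
     (\<forall>x\<in>carrier_vec (nb N). x \<bullet> (Omega N *\<^sub>v x) \<ge> 0) \<and>
     Kset N \<subseteq> carrier_mat (nb N) (nb N) \<and> mat_set_convex (Kset N) \<and>
     (\<forall>e\<in>lines N. convex_on {0..} (Delta N e) \<and> mono_on {0..} (Delta N e) \<and>
        (\<forall>x\<ge>0. Delta N e x \<ge> 0))"

end

theory Submission
  imports Defs
begin

lemma qf_sum:
  fixes Om :: "real mat"
  assumes "Om \<in> carrier_mat n n" "x \<in> carrier_vec n"
  shows "x \<bullet> (Om *\<^sub>v x) = (\<Sum>i<n. \<Sum>j<n. x$i * Om$$(i,j) * x$j)"
  using assms by (auto simp: scalar_prod_def sum_distrib_left mult.assoc lessThan_atLeast0 intro!: sum.cong)

lemma qf_conv: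
  fixes Om :: "real mat"
  assumes Om: "Om \<in> carrier_mat n n" and psd: "\<forall>v\<in>carrier_vec n. v \<bullet> (Om *\<^sub>v v) \<ge> 0"
    and x: "x \<in> carrier_vec n" and y: "y \<in> carrier_vec n" and z: "z \<in> carrier_vec n"
    and zi: "\<And>i. i < n \<Longrightarrow> z$i = (1-t)*x$i + t*y$i" and t: "0 \<le> t" "t \<le> 1"
  shows "z \<bullet> (Om *\<^sub>v z) \<le> (1-t) * (x \<bullet> (Om *\<^sub>v x)) + t * (y \<bullet> (Om *\<^sub>v y))"
proof -
  have xy: "x - y \<in> carrier_vec n" using x y by auto
  have d: "(x - y)$i = x$i - y$i" if "i<n" for i using x y that by auto
  have "(1-t) * (x \<bullet> (Om *\<^sub>v x)) + t * (y \<bullet> (Om *\<^sub>v y)) - z \<bullet> (Om *\<^sub>v z)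
     = t*(1-t) * ((x-y) \<bullet> (Om *\<^sub>v (x-y)))"
    unfolding qf_sum[OF Om x] qf_sum[OF Om y] qf_sum[OF Om z] qf_sum[OF Om xy]
    by (simp add: sum_distrib_left sum_subtractf[symmetric] sum.distrib[symmetric] zi d
        algebra_simps)
  moreover have "t*(1-t) * ((x-y) \<bullet> (Om *\<^sub>v (x-y))) \<ge> 0"
    using psd xy t by auto
  ultimately show ?thesis by linarith
qed

lemma piv_carrier: "piv N e \<in> carrier_vec (nb N)"
  unfolding piv_def breveB_def by (auto simp: row_def)

definition xv :: "net \<Rightarrow> real mat \<Rightarrow> nat \<times> nat \<Rightarrow> real vec" where
  "xv N A e = transpose_mat (1\<^sub>m (nb N) - A) *\<^sub>v piv N e"

lemma xv_carrier: "A \<in> carrier_mat (nb N) (nb N) \<Longrightarrow> xv N A e \<in> carrier_vec (nb N)"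
  unfolding xv_def by (auto intro!: carrier_vecI)

lemma Vvar_xv:
  assumes A: "A \<in> carrier_mat (nb N) (nb N)" and Om: "Omega N \<in> carrier_mat (nb N) (nb N)"
  shows "Vvar N A e = (susc N e)\<^sup>2 * (xv N A e \<bullet> (Omega N *\<^sub>v xv N A e))"
proof -
  let ?M = "1\<^sub>m (nb N) - A"
  have M: "?M \<in> carrier_mat (nb N) (nb N)" using A by auto
  have "(?M * Omega N * transpose_mat ?M) *\<^sub>v piv N e = ?M *\<^sub>v (Omega N *\<^sub>v xv N A e)"
    unfolding xv_def using M Om piv_carrier[of N e]
    by (subst assoc_mult_mat_vec[of _ "nb N" "nb N"], auto)
  moreover have "piv N e \<bullet> (?M *\<^sub>v (Omega N *\<^sub>v xv N A e)) = xv N A e \<bullet> (Omega N *\<^sub>v xv N A e)"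
    unfolding xv_def using M Om piv_carrier[of N e]
    by (subst transpose_vec_mult_scalar[of _ "nb N" "nb N"], auto)
  moreover have "transpose_mat ?M = 1\<^sub>m (nb N) - transpose_mat A"
    using A by (simp add: transpose_minus[of _ "nb N" "nb N"])
  ultimately show ?thesis unfolding Vvar_def by simp
qed

lemma xv_comb:
  assumes A: "A \<in> carrier_mat (nb N) (nb N)" and B: "B \<in> carrier_mat (nb N) (nb N)" and i: "i < nb N"
  shows "xv N ((1 - t) \<cdot>\<^sub>m A + t \<cdot>\<^sub>m B) e $ i = (1-t) * xv N A e $ i + t * xv N B e $ i"
  using A B i piv_carrier[of N e]
  by (simp add: xv_def scalar_prod_def sum_distrib_left sum.distrib[symmetric] algebra_simps
      sum_subtractf[symmetric])

lemma Vvar_nonneg: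
  assumes wf: "net_wf N" and A: "A \<in> carrier_mat (nb N) (nb N)"
  shows "Vvar N A e \<ge> 0"
proof -
  have Om: "Omega N \<in> carrier_mat (nb N) (nb N)" and psd: "\<forall>x\<in>carrier_vec (nb N). x \<bullet> (Omega N *\<^sub>v x) \<ge> 0"
    using wf unfolding net_wf_def by auto
  show ?thesis unfolding Vvar_xv[OF A Om] using psd xv_carrier[OF A] by auto
qed

lemma Vvar_conv:
  assumes wf: "net_wf N" and A: "A \<in> carrier_mat (nb N) (nb N)" and B: "B \<in> carrier_mat (nb N) (nb N)"
    and t: "0 \<le> t" "t \<le> 1"
  shows "Vvar N ((1 - t) \<cdot>\<^sub>m A + t \<cdot>\<^sub>m B) e \<le> (1-t) * Vvar N A e + t * Vvar N B e"
proof -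
  have Om: "Omega N \<in> carrier_mat (nb N) (nb N)" and psd: "\<forall>x\<in>carrier_vec (nb N). x \<bullet> (Omega N *\<^sub>v x) \<ge> 0"
    using wf unfolding net_wf_def by auto
  have C: "(1 - t) \<cdot>\<^sub>m A + t \<cdot>\<^sub>m B \<in> carrier_mat (nb N) (nb N)" using A B by auto
  have "xv N ((1 - t) \<cdot>\<^sub>m A + t \<cdot>\<^sub>m B) e \<bullet> (Omega N *\<^sub>v xv N ((1 - t) \<cdot>\<^sub>m A + t \<cdot>\<^sub>m B) e)
     \<le> (1-t) * (xv N A e \<bullet> (Omega N *\<^sub>v xv N A e)) + t * (xv N B e \<bullet> (Omega N *\<^sub>v xv N B e))"
    by (rule qf_conv[OF Om psd xv_carrier[OF A] xv_carrier[OF B] xv_carrier[OF C] xv_comb[OF A B] t])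
  from mult_left_mono[OF this, of "(susc N e)\<^sup>2"] show ?thesis
    unfolding Vvar_xv[OF A Om] Vvar_xv[OF B Om] Vvar_xv[OF C Om] by (simp add: algebra_simps)
qed

lemma metric_conv:
  assumes wf: "net_wf N" and A: "A \<in> carrier_mat (nb N) (nb N)" and B: "B \<in> carrier_mat (nb N) (nb N)"
    and t: "0 \<le> t" "t \<le> 1"
  shows "metric N g (Vvar N ((1 - t) \<cdot>\<^sub>m A + t \<cdot>\<^sub>m B)) \<le> (1-t) * metric N g1 (Vvar N A) + t * metric N g2 (Vvar N B)"
proof -
  have C: "(1 - t) \<cdot>\<^sub>m A + t \<cdot>\<^sub>m B \<in> carrier_mat (nb N) (nb N)" using A B by auto
  have "Delta N e (Vvar N ((1 - t) \<cdot>\<^sub>m A + t \<cdot>\<^sub>m B) e) \<le> (1-t) * Delta N e (Vvar N A e) + t * Delta N e (Vvar N B e)"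
    if e: "e \<in> lines N" for e
  proof -
    have cv: "convex_on {0..} (Delta N e)" and mo: "mono_on {0..} (Delta N e)"
      using wf e unfolding net_wf_def by auto
    have a: "Vvar N A e \<ge> 0" and b: "Vvar N B e \<ge> 0" and c: "Vvar N ((1 - t) \<cdot>\<^sub>m A + t \<cdot>\<^sub>m B) e \<ge> 0"
      using Vvar_nonneg[OF wf] A B C by auto
    have "Delta N e (Vvar N ((1 - t) \<cdot>\<^sub>m A + t \<cdot>\<^sub>m B) e) \<le> Delta N e ((1-t) * Vvar N A e + t * Vvar N B e)"
      by (rule mono_onD[OF mo]) (use a b c t Vvar_conv[OF wf A B t, of e] in auto)
    also have "\<dots> \<le> (1-t) * Delta N e (Vvar N A e) + t * Delta N e (Vvar N B e)"
      using convex_onD[OF cv, of t "Vvar N A e" "Vvar N B e"] a b t by simp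
    finally show ?thesis .
  qed
  then show ?thesis unfolding metric_def
    by (auto simp: sum_distrib_left sum.distrib[symmetric] intro!: sum_mono)
qed

lemma small_step:
  assumes wf: "net_wf N" and A: "A \<in> carrier_mat (nb N) (nb N)" and B: "B \<in> carrier_mat (nb N) (nb N)"
    and tp: "0 < tt"
  shows "\<exists>t. 0 < t \<and> t \<le> 1 \<and> (\<forall>e\<in>lines N.
     nu_line N e * sqrt (Vvar N ((1 - t) \<cdot>\<^sub>m A + t \<cdot>\<^sub>m B) e) \<le> nu_line N e * sqrt (Vvar N A e) + tt * fmax N e)"
proof -
  define te where "te e = (tt * fmax N e / (nu_line N e + 1))\<^sup>2 / (Vvar N B e + 1)" for e
  define t where "t = Min (insert 1 (te ` lines N))"
  have fin: "finite (lines N)" using wf unfolding net_wf_def by auto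
  have lp: "0 < fmax N e" "0 \<le> nu_line N e" if "e \<in> lines N" for e using wf that unfolding net_wf_def by auto
  have VB: "Vvar N B e \<ge> 0" for e using Vvar_nonneg[OF wf B] .
  have VA: "Vvar N A e \<ge> 0" for e using Vvar_nonneg[OF wf A] .
  have tep: "te e > 0" if "e \<in> lines N" for e
    unfolding te_def using lp[OF that] tp VB[of e] by (auto intro!: divide_pos_pos)
  have t0: "0 < t" unfolding t_def using fin tep by (auto simp: Min_gr_iff)
  have t1: "t \<le> 1" unfolding t_def using fin by auto
  have tle: "t \<le> te e" if "e \<in> lines N" for e unfolding t_def using fin that by auto
  show ?thesis
  proof (intro exI conjI ballI)
    fix e assume e: "e \<in> lines N"
    let ?c = "tt * fmax N e / (nu_line N e + 1)"
    have cp: "?c > 0" using lp[OF e] tp by auto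
    have "Vvar N ((1 - t) \<cdot>\<^sub>m A + t \<cdot>\<^sub>m B) e \<le> Vvar N A e + t * Vvar N B e"
    proof -
      have "(1-t) * Vvar N A e \<le> Vvar N A e"
        using mult_nonneg_nonneg[of t "Vvar N A e"] t0 VA[of e] by (simp add: algebra_simps)
      then show ?thesis using Vvar_conv[OF wf A B, of t e] t0 t1 by linarith
    qed
    hence "sqrt (Vvar N ((1 - t) \<cdot>\<^sub>m A + t \<cdot>\<^sub>m B) e) \<le> sqrt (Vvar N A e + t * Vvar N B e)"
      by (rule real_sqrt_le_mono)
    also have "\<dots> \<le> sqrt (Vvar N A e) + sqrt (t * Vvar N B e)"
      by (rule sqrt_add_le_add_sqrt) (use VA VB t0 in auto)
    also have "sqrt (t * Vvar N B e) \<le> ?c"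
    proof -
      have "t * Vvar N B e \<le> te e * (Vvar N B e + 1)"
        using tle[OF e] t0 VB[of e] by (smt (verit) mult_mono)
      also have "\<dots> = ?c\<^sup>2"
      proof -
        have ne: "Vvar N B e + 1 \<noteq> 0" using VB[of e] by linarith
        show ?thesis unfolding te_def using ne by simp
      qed
      finally show ?thesis using cp by (metis real_sqrt_le_mono real_sqrt_abs abs_of_pos)
    qed
    finally have *: "sqrt (Vvar N ((1 - t) \<cdot>\<^sub>m A + t \<cdot>\<^sub>m B) e) \<le> sqrt (Vvar N A e) + ?c" by simp
    have "nu_line N e * ?c \<le> tt * fmax N e"
      using lp[OF e] tp by (simp add: field_simps)
    then show "nu_line N e * sqrt (Vvar N ((1 - t) \<cdot>\<^sub>m A + t \<cdot>\<^sub>m B) e) \<le> nu_line N e * sqrt (Vvar N A e) + tt * fmax N e"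
      using mult_left_mono[OF *, of "nu_line N e"] lp[OF e] by (simp add: algebra_simps)
  qed (use t0 t1 in auto)
qed

theorem theorem1:
  fixes N :: net and \<tau> :: real and Nit k :: nat
    and p :: "nat \<Rightarrow> real vec" and f :: "nat \<Rightarrow> nat \<times> nat \<Rightarrow> real" and \<theta> :: "nat \<Rightarrow> real vec"
    and A Ahat :: "nat \<Rightarrow> real mat" and shat :: "nat \<Rightarrow> nat \<times> nat \<Rightarrow> real"
    and lam tau :: "nat \<Rightarrow> real"
  assumes wf: "net_wf N"
    and init: "scopf_feasible N (p 0) (f 0) (A 0)"
    and tau_pos: "0 < \<tau>" and tau_lt1: "\<tau> < 1"
    and k_ge: "1 \<le> k" and k_le: "k \<le> Nit"
    and tau_def: "\<forall>j\<in>{1..k}. tau j = \<tau> / 2 ^ (j - 1)"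
    and step1: "\<forall>j\<in>{1..k}. reroute_opt N (A (j - 1)) (tau j) (p j) (f j) (\<theta> j)"
    and step2: "\<forall>j\<in>{1..k}. vshift_opt N (f j) (A (j - 1)) (tau j) (shat j) (Ahat j)"
    and step3: "\<forall>j\<in>{1..k}. is_greatest {l. 0 < l \<and> l \<le> 1 \<and>
                   compatible N (f j) ((1 - l) \<cdot>\<^sub>m A (j - 1) + l \<cdot>\<^sub>m Ahat j)} (lam j)"
    and step4: "\<forall>j\<in>{1..k}. A j = (1 - lam j) \<cdot>\<^sub>m A (j - 1) + lam j \<cdot>\<^sub>m Ahat j"
    and no_stop: "\<forall>j\<in>{1..<k}. metric N (f j) (Vvar N (A j)) < metric N (f (j - 1)) (Vvar N (A (j - 1)))"
    and stop: "metric N (f k) (Vvar N (A k)) \<ge> metric N (f (k - 1)) (Vvar N (A (k - 1)))"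
  shows "is_least {metric N g (Vvar N B) | g B. compatible N g B}
                 (metric N (f (k - 1)) (Vvar N (A (k - 1))))"
proof -
  have kk: "k \<in> {1..k}" using k_ge by auto
  have K: "Kset N \<subseteq> carrier_mat (nb N) (nb N)" and Kc: "mat_set_convex (Kset N)"
    using wf unfolding net_wf_def by auto
  have compA: "compatible N (f (k-1)) (A (k-1))"
  proof (cases "k = 1")
    case True then show ?thesis using init unfolding compatible_def by auto
  next
    case False
    then have j: "k-1 \<in> {1..k}" using k_ge by auto
    from step3[rule_format, OF j] have "compatible N (f (k-1)) ((1 - lam (k-1)) \<cdot>\<^sub>m A (k-1-1) + lam (k-1) \<cdot>\<^sub>m Ahat (k-1))"
      unfolding is_greatest_def by blast
    then show ?thesis using step4 j by metis
  qed
  have AK: "A (k-1) \<in> Kset N" using compA unfolding compatible_def scopf_feasible_def by auto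
  have Ac: "A (k-1) \<in> carrier_mat (nb N) (nb N)" using AK K by auto
  have lok: "line_ok N (A (k-1)) (f k) (1 - tau k)"
    using step1 kk unfolding reroute_opt_def reroute_feasible_def by auto
  have vf: "vshift_feasible N (f k) (A (k-1)) (tau k) (shat k) (Ahat k)"
    and vopt: "\<And>s' B. vshift_feasible N (f k) (A (k-1)) (tau k) s' B \<Longrightarrow>
        metric N (f k) (\<lambda>e. (shat k e)\<^sup>2) \<le> metric N (f k) (\<lambda>e. (s' e)\<^sup>2)"
    using step2[rule_format, OF kk] unfolding vshift_opt_def by blast+
  have AhK: "Ahat k \<in> Kset N" using vf unfolding vshift_feasible_def by auto
  have Ahc: "Ahat k \<in> carrier_mat (nb N) (nb N)" using AhK K by auto
  have lam: "0 < lam k" "lam k \<le> 1" using step3 kk unfolding is_greatest_def by auto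
  have m1: "metric N (f k) (Vvar N (A k)) \<le> (1 - lam k) * metric N (f (k-1)) (Vvar N (A (k-1)))
      + lam k * metric N (f (k-1)) (Vvar N (Ahat k))"
    using metric_conv[OF wf Ac Ahc, of "lam k"] lam step4 kk by auto
  have m2: "metric N (f (k-1)) (Vvar N (Ahat k)) \<le> metric N (f k) (\<lambda>e. (shat k e)\<^sup>2)"
    unfolding metric_def
  proof (rule sum_mono)
    fix e assume e: "e \<in> lines N"
    have mo: "mono_on {0..} (Delta N e)" using wf e unfolding net_wf_def by auto
    have "Vvar N (Ahat k) e \<le> (shat k e)\<^sup>2" using vf e unfolding vshift_feasible_def by auto
    then show "Delta N e (Vvar N (Ahat k) e) \<le> Delta N e ((shat k e)\<^sup>2)"
      using mono_onD[OF mo] Vvar_nonneg[OF wf Ahc, of e] by auto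
  qed
  have m3: "metric N (f (k-1)) (Vvar N (A (k-1))) \<le> metric N (f (k-1)) (Vvar N (Ahat k))"
  proof -
    have "lam k * metric N (f (k-1)) (Vvar N (A (k-1))) \<le> lam k * metric N (f (k-1)) (Vvar N (Ahat k))"
      using m1 stop by (simp add: algebra_simps)
    then show ?thesis using lam by simp
  qed
  have taup: "0 < tau k" using tau_def kk tau_pos by auto
  show ?thesis unfolding is_least_def
  proof (intro conjI ballI)
    show "metric N (f (k - 1)) (Vvar N (A (k - 1))) \<in> {metric N g (Vvar N B) |g B. compatible N g B}"
      using compA by blast
  next
    fix y assume "y \<in> {metric N g (Vvar N B) |g B. compatible N g B}"
    then obtain g B where y: "y = metric N g (Vvar N B)" and cB: "compatible N g B" by blast
    have BK: "B \<in> Kset N" using cB unfolding compatible_def scopf_feasible_def by auto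
    have Bc: "B \<in> carrier_mat (nb N) (nb N)" using BK K by auto
    obtain t where t0: "0 < t" and t1: "t \<le> 1" and sm: "\<forall>e\<in>lines N.
       nu_line N e * sqrt (Vvar N ((1 - t) \<cdot>\<^sub>m A (k-1) + t \<cdot>\<^sub>m B) e)
         \<le> nu_line N e * sqrt (Vvar N (A (k-1)) e) + tau k * fmax N e"
      using small_step[OF wf Ac Bc taup] by blast
    define C where "C = (1 - t) \<cdot>\<^sub>m A (k-1) + t \<cdot>\<^sub>m B"
    have CK: "C \<in> Kset N" using Kc AK BK t0 t1 unfolding mat_set_convex_def C_def by auto
    have Cc: "C \<in> carrier_mat (nb N) (nb N)" using CK K by auto
    have VC: "Vvar N C e \<ge> 0" for e using Vvar_nonneg[OF wf Cc] .
    have "vshift_feasible N (f k) (A (k-1)) (tau k) (\<lambda>e. sqrt (Vvar N C e)) C"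
      unfolding vshift_feasible_def
    proof (intro conjI ballI)
      fix e assume "e \<in> Tset N (f k) (A (k - 1)) (tau k)"
      then have e: "e \<in> lines N" unfolding Tset_def by auto
      have "\<bar>f k e\<bar> + nu_line N e * sqrt (Vvar N (A (k-1)) e) \<le> (1 - tau k) * fmax N e"
        using lok e unfolding line_ok_def by auto
      then show "\<bar>f k e\<bar> + nu_line N e * sqrt (Vvar N C e) \<le> fmax N e"
        using sm e unfolding C_def by (auto simp: algebra_simps)
    qed (use CK VC in auto)
    from vopt[OF this] have "metric N (f k) (\<lambda>e. (shat k e)\<^sup>2) \<le> metric N (f (k-1)) (Vvar N C)"
      using VC by (simp add: metric_def)
    moreover have "metric N (f (k-1)) (Vvar N C) \<le> (1-t) * metric N (f (k-1)) (Vvar N (A (k-1))) + t * metric N g (Vvar N B)"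
      unfolding C_def by (rule metric_conv[OF wf Ac Bc]) (use t0 t1 in auto)
    ultimately have "t * metric N (f (k-1)) (Vvar N (A (k-1))) \<le> t * metric N g (Vvar N B)"
      using m2 m3 by (simp add: algebra_simps)
    then show "metric N (f (k - 1)) (Vvar N (A (k - 1))) \<le> y" using t0 y by simp
  qed
qed

end
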